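(* Let $\lambda\in[0,1]$. For every $\alpha$ with $1\le\alpha<\frac{2(1-\lambda)}{2\lambda+1}$, there exists an instance with the weighted single metric loss with parameter $\lambda$ in which no clustering is in the $\alpha$-core.
   Context: Instance: finite nonempty set $\mathcal{N}$ of $n$ agents, finite nonempty set $\mathcal{M}$ of feasible centers, positive integer $k$, pseudometric $d$ on $\mathcal{N}\cup\mathcal{M}$. Weighted single metric loss: $\ell_i(C,x)=\lambda\max_{j\in C}d(i,j)+(1-\lambda)d(i,x)$ for $i\in C\subseteq\mathcal{N}$, $x\in\mathcal{M}$. A clustering is $\mathcal{X}=\{(C_1,x_1),\dots,(C_k,x_k)\}$ with $C_t$ pairwise disjoint (some possibly empty), union $\mathcal{N}$, $x_t\in\mathcal{M}$; $\ell_i(\mathcal{X})=\ell_i(C_t,x_t)$ where $i\in C_t$. For $\alpha\ge1$, $\mathcal{X}$ is in the $\alpha$-core if there is no $S\subseteq\mathcal{N}$ with $|S|\ge n/k$ and $y\in\mathcal{M}$ with $\alpha\,\ell_i(S,y)<\ell_i(\mathcal{X})$ for all $i\in S$. *)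

theory Defs
  imports Complex_Main
begin

definition pseudometric_on :: "nat set \<Rightarrow> (nat \<Rightarrow> nat \<Rightarrow> real) \<Rightarrow> bool" where
  "pseudometric_on A d \<longleftrightarrow>
     (\<forall>a\<in>A. d a a = 0) \<and>
     (\<forall>a\<in>A. \<forall>b\<in>A. d a b \<ge> 0 \<and> d a b = d b a) \<and>
     (\<forall>a\<in>A. \<forall>b\<in>A. \<forall>c\<in>A. d a c \<le> d a b + d b c)"

definition wloss :: "real \<Rightarrow> (nat \<Rightarrow> nat \<Rightarrow> real) \<Rightarrow> nat set \<Rightarrow> nat \<Rightarrow> nat \<Rightarrow> real" where
  "wloss lam d C x i = lam * Max (d i ` C) + (1 - lam) * d i x"

text \<open>A clustering with k (possibly empty) clusters C 0, ..., C (k-1) and centers x 0, ..., x (k-1).\<close>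
definition is_clustering :: "nat set \<Rightarrow> nat set \<Rightarrow> nat \<Rightarrow> (nat \<Rightarrow> nat set) \<Rightarrow> (nat \<Rightarrow> nat) \<Rightarrow> bool" where
  "is_clustering N M k C x \<longleftrightarrow>
     (\<forall>t<k. x t \<in> M) \<and>
     (\<forall>s<k. \<forall>t<k. s \<noteq> t \<longrightarrow> C s \<inter> C t = {}) \<and>
     (\<Union>t<k. C t) = N"

definition in_alpha_core ::
  "real \<Rightarrow> (nat \<Rightarrow> nat \<Rightarrow> real) \<Rightarrow> nat set \<Rightarrow> nat set \<Rightarrow> nat \<Rightarrow> real
     \<Rightarrow> (nat \<Rightarrow> nat set) \<Rightarrow> (nat \<Rightarrow> nat) \<Rightarrow> bool" where
  "in_alpha_core lam d N M k \<alpha> C x \<longleftrightarrow>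
     \<not> (\<exists>S y. S \<subseteq> N \<and> real (card S) \<ge> real (card N) / real k \<and> y \<in> M \<and>
            (\<forall>i\<in>S. \<forall>t<k. i \<in> C t \<longrightarrow> \<alpha> * wloss lam d S y i < wloss lam d (C t) (x t) i))"

end

theory Submission imports Defs begin

definition blocks :: "real \<Rightarrow> real \<Rightarrow> (nat \<Rightarrow> nat \<Rightarrow> real) \<Rightarrow> (nat \<Rightarrow> nat set) \<Rightarrow> (nat \<Rightarrow> nat) \<Rightarrow> nat set \<Rightarrow> nat \<Rightarrow> bool" where
 "blocks lam \<alpha> d C x S y \<longleftrightarrow> (\<forall>i\<in>S. \<forall>t<3. i \<in> C t \<longrightarrow> \<alpha> * wloss lam d S y i < wloss lam d (C t) (x t) i)"

lemma wloss_lb: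
  assumes "finite C" "j \<in> C" "0 \<le> lam"
  shows "lam * d i j + (1-lam) * d i x \<le> wloss lam d C x i"
proof -
  have "d i j \<le> Max (d i ` C)" using assms by auto
  then show ?thesis unfolding wloss_def using assms(3) by (simp add: mult_left_mono)
qed

lemma wloss_pair:
  assumes "d p p = 0" "d p q \<ge> 0"
  shows "wloss lam d {p,q} y p = lam * d p q + (1-lam) * d p y"
  unfolding wloss_def using assms by (simp add: max_def)

locale arsetup =
  fixes lam \<alpha> :: real
  assumes l0: "0 \<le> lam" and l1: "lam \<le> 1" and a1: "1 \<le> \<alpha>" and ab: "\<alpha> < 2 * (1 - lam) / (2 * lam + 1)"
begin
lemma key: "\<alpha> * (2*lam+1) < 2*(1-lam)"
  using ab l0 by (simp add: pos_less_divide_eq)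
lemma lam_small: "lam < 1/4"
proof -
  have "1 * (2*lam+1) \<le> \<alpha> * (2*lam+1)" using a1 l0 by (intro mult_right_mono) auto
  then show ?thesis using key by (simp add: algebra_simps)
qed
lemma a2: "\<alpha> < 2"
proof -
  have "\<alpha> * 1 \<le> \<alpha> * (2*lam+1)" using a1 l0 by (intro mult_left_mono) auto
  then show ?thesis using key l0 by (simp add: algebra_simps)
qed
lemma ar1: "\<alpha> * (lam * 3 + (1-lam) * 1) < lam * 3 + (1-lam) * 2"
  using key l0 by (simp add: algebra_simps)
lemma ar2: "\<alpha> * (lam * 3 + (1-lam) * 2) < lam * 3 + (1-lam) * 4"
proof -
  have "\<alpha> * (1-lam) \<le> 2 * (1-lam)" using a2 l1 by (intro mult_right_mono) auto
  then show ?thesis using key l0 by (simp add: algebra_simps)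
qed
lemma ar3: assumes "0 \<le> e" "e \<le> 4" shows "\<alpha> * (lam * 3 + (1-lam) * e) < 100 * (1-lam)"
proof -
  have "(1-lam) * e \<le> (1-lam) * 4" using assms l1 by (intro mult_left_mono) auto
  hence "lam * 3 + (1-lam) * e \<le> 4" using l0 by (simp add: algebra_simps)
  moreover have "0 \<le> lam * 3 + (1-lam) * e" using assms l0 l1 by simp
  ultimately have "\<alpha> * (lam * 3 + (1-lam) * e) \<le> 2 * 4"
    using a2 by (meson a1 le_less_trans less_eq_real_def mult_mono zero_le_one)
  moreover have "8 < 100 * (1-lam)" using lam_small by simp
  ultimately show ?thesis by linarith
qed

lemma rot:
  fixes d :: "nat \<Rightarrow> nat \<Rightarrow> real"
  assumes "p \<noteq> q"
   "d p p = 0" "d q q = 0" "d p q = 3" "d q p = 3" "d p r = 3" "d q r = 3"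
   "d p xz = 2" "d p y = 1" "d q xz = 4" "d q y = 2"
   "tz < 3" "x tz = xz"
   "(p \<in> C tz \<and> q \<in> C tz) \<or> (p \<in> C tz \<and> r \<in> C tz) \<or> (q \<in> C tz \<and> r \<in> C tz)"
   "\<forall>t<3. t \<noteq> tz \<longrightarrow> d p (x t) = 100 \<and> d q (x t) = 100"
   "\<forall>t<3. finite (C t)"
  shows "blocks lam \<alpha> d C x {p,q} y"
  unfolding blocks_def
proof (intro ballI allI impI)
  fix i t assume i: "i \<in> {p,q}" and t: "t < 3" and it: "i \<in> C t"
  have fin: "finite (C t)" using assms t by auto
  have wp: "wloss lam d {p,q} y p = lam * 3 + (1-lam) * 1"
    using wloss_pair[of d p q lam y] assms by simp
  have wq: "wloss lam d {p,q} y q = lam * 3 + (1-lam) * 2"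
    using wloss_pair[of d q p lam y] assms by (simp add: insert_commute)
  show "\<alpha> * wloss lam d {p, q} y i < wloss lam d (C t) (x t) i"
  proof (cases "t = tz")
    case True
    show ?thesis
    proof (cases "i = p")
      case ip: True
      have "\<exists>m\<in>C t. d p m = 3" using assms True it ip by blast
      then obtain m where "m \<in> C t" "d p m = 3" by blast
      hence "lam * 3 + (1-lam) * 2 \<le> wloss lam d (C t) (x t) i"
        using wloss_lb[OF fin, of m lam d p "x t"] l0 assms True ip by simp
      moreover have "\<alpha> * wloss lam d {p,q} y i = \<alpha> * (lam * 3 + (1-lam) * 1)" using wp ip by simp
      ultimately show ?thesis using ar1 by linarith
    next
      case iq: False
      hence iq: "i = q" using i by auto
      have "\<exists>m\<in>C t. d q m = 3" using assms True it iq by blast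
      then obtain m where "m \<in> C t" "d q m = 3" by blast
      hence "lam * 3 + (1-lam) * 4 \<le> wloss lam d (C t) (x t) i"
        using wloss_lb[OF fin, of m lam d q "x t"] l0 assms True iq by simp
      moreover have "\<alpha> * wloss lam d {p,q} y i = \<alpha> * (lam * 3 + (1-lam) * 2)" using wq iq by simp
      ultimately show ?thesis using ar2 by linarith
    qed
  next
    case False
    have "d i (x t) = 100" using assms False t i by auto
    moreover have "d i i = 0" using assms i by auto
    ultimately have "lam * 0 + (1-lam) * 100 \<le> wloss lam d (C t) (x t) i"
      using wloss_lb[OF fin it, of lam d i "x t"] l0 by simp
    moreover have "\<alpha> * wloss lam d {p, q} y i < 100 * (1-lam)"
      using i wp wq ar3[of 1] ar3[of 2] by auto
    ultimately show ?thesis by linarith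
  qed
qed

lemma farpair:
  fixes d :: "nat \<Rightarrow> nat \<Rightarrow> real"
  assumes "p \<noteq> q"
   "d p p = 0" "d q q = 0" "d p q = 3" "d q p = 3"
   "0 \<le> d p y" "d p y \<le> 4" "0 \<le> d q y" "d q y \<le> 4"
   "\<forall>t<3. p \<in> C t \<longrightarrow> d p (x t) = 100"
   "\<forall>t<3. q \<in> C t \<longrightarrow> d q (x t) = 100"
   "\<forall>t<3. finite (C t)"
  shows "blocks lam \<alpha> d C x {p,q} y"
  unfolding blocks_def
proof (intro ballI allI impI)
  fix i t assume i: "i \<in> {p,q}" and t: "t < 3" and it: "i \<in> C t"
  have fin: "finite (C t)" using assms t by auto
  have wp: "wloss lam d {p,q} y p = lam * 3 + (1-lam) * d p y"
    using wloss_pair[of d p q lam y] assms by simp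
  have wq: "wloss lam d {p,q} y q = lam * 3 + (1-lam) * d q y"
    using wloss_pair[of d q p lam y] assms by (simp add: insert_commute)
  have "d i (x t) = 100" using assms t i it by auto
  moreover have "d i i = 0" using assms i by auto
  ultimately have "lam * 0 + (1-lam) * 100 \<le> wloss lam d (C t) (x t) i"
    using wloss_lb[OF fin it, of lam d i "x t"] l0 by simp
  moreover have "\<alpha> * wloss lam d {p, q} y i < 100 * (1-lam)"
    using i wp wq ar3[of "d p y"] ar3[of "d q y"] assms by auto
  ultimately show "\<alpha> * wloss lam d {p, q} y i < wloss lam d (C t) (x t) i" by linarith
qed

lemma sidelem:
  fixes d :: "nat \<Rightarrow> nat \<Rightarrow> real"
  assumes dist: "a0 \<noteq> a1" "a0 \<noteq> a2" "a1 \<noteq> a2"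
   and z: "d a0 a0 = 0" "d a1 a1 = 0" "d a2 a2 = 0"
   and aa: "d a0 a1 = 3" "d a1 a0 = 3" "d a0 a2 = 3" "d a2 a0 = 3" "d a1 a2 = 3" "d a2 a1 = 3"
   and ac: "d a0 c0 = 2" "d a0 c1 = 4" "d a0 c2 = 1"
     "d a1 c0 = 1" "d a1 c1 = 2" "d a1 c2 = 4"
     "d a2 c0 = 4" "d a2 c1 = 1" "d a2 c2 = 2"
   and far: "\<forall>t<3. x t \<notin> {c0,c1,c2} \<longrightarrow> d a0 (x t) = 100 \<and> d a1 (x t) = 100 \<and> d a2 (x t) = 100"
   and cov: "\<forall>i\<in>{a0,a1,a2}. \<exists>t<3. i \<in> C t"
   and uniq: "\<forall>t1<3. \<forall>t2<3. x t1 \<in> {c0,c1,c2} \<longrightarrow> x t2 \<in> {c0,c1,c2} \<longrightarrow> t1 = t2"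
   and fin: "\<forall>t<3. finite (C t)"
  shows "\<exists>S y. S \<subseteq> {a0,a1,a2} \<and> card S = 2 \<and> y \<in> {c0,c1,c2} \<and> blocks lam \<alpha> d C x S y"
proof (cases "\<exists>t0<3. x t0 \<in> {c0,c1,c2} \<and> ((a0 \<in> C t0 \<and> a1 \<in> C t0) \<or> (a0 \<in> C t0 \<and> a2 \<in> C t0) \<or> (a1 \<in> C t0 \<and> a2 \<in> C t0))")
  case True
  then obtain t0 where t0: "t0 < 3" "x t0 \<in> {c0,c1,c2}"
    and two: "(a0 \<in> C t0 \<and> a1 \<in> C t0) \<or> (a0 \<in> C t0 \<and> a2 \<in> C t0) \<or> (a1 \<in> C t0 \<and> a2 \<in> C t0)" by blast
  have ff: "\<forall>t<3. t \<noteq> t0 \<longrightarrow> d a0 (x t) = 100 \<and> d a1 (x t) = 100 \<and> d a2 (x t) = 100"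
  proof (intro allI impI)
    fix t assume tt: "t < 3" "t \<noteq> t0"
    then have "x t \<notin> {c0,c1,c2}" using uniq t0 by blast
    then show "d a0 (x t) = 100 \<and> d a1 (x t) = 100 \<and> d a2 (x t) = 100" using far tt by blast
  qed
  from t0(2) consider "x t0 = c0" | "x t0 = c1" | "x t0 = c2" by blast
  then show ?thesis
  proof cases
    case 1
    have "blocks lam \<alpha> d C x {a0,a2} c2"
      proof (rule rot[where r=a1 and tz=t0 and xz=c0])
      show "(a0 \<in> C t0 \<and> a2 \<in> C t0) \<or> (a0 \<in> C t0 \<and> a1 \<in> C t0) \<or> (a2 \<in> C t0 \<and> a1 \<in> C t0)" using two by blast
      show "\<forall>t<3. t \<noteq> t0 \<longrightarrow> d a0 (x t) = 100 \<and> d a2 (x t) = 100" using ff by simp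
    qed (use dist z aa ac t0 fin 1 in simp_all)
    moreover have "card {a0,a2} = 2" using dist by simp
    ultimately show ?thesis by (intro exI[where x="{a0,a2}"] exI[where x=c2]) simp
  next
    case 2
    have "blocks lam \<alpha> d C x {a1,a0} c0"
      proof (rule rot[where r=a2 and tz=t0 and xz=c1])
      show "(a1 \<in> C t0 \<and> a0 \<in> C t0) \<or> (a1 \<in> C t0 \<and> a2 \<in> C t0) \<or> (a0 \<in> C t0 \<and> a2 \<in> C t0)" using two by blast
      show "\<forall>t<3. t \<noteq> t0 \<longrightarrow> d a1 (x t) = 100 \<and> d a0 (x t) = 100" using ff by simp
    qed (use dist z aa ac t0 fin 2 in simp_all)
    moreover have "card {a1,a0} = 2" using dist by simp
    ultimately show ?thesis by (intro exI[where x="{a1,a0}"] exI[where x=c0]) simp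
  next
    case 3
    have "blocks lam \<alpha> d C x {a2,a1} c1"
      proof (rule rot[where r=a0 and tz=t0 and xz=c2])
      show "(a2 \<in> C t0 \<and> a1 \<in> C t0) \<or> (a2 \<in> C t0 \<and> a0 \<in> C t0) \<or> (a1 \<in> C t0 \<and> a0 \<in> C t0)" using two by blast
      show "\<forall>t<3. t \<noteq> t0 \<longrightarrow> d a2 (x t) = 100 \<and> d a1 (x t) = 100" using ff by simp
    qed (use dist z aa ac t0 fin 3 in simp_all)
    moreover have "card {a2,a1} = 2" using dist by simp
    ultimately show ?thesis by (intro exI[where x="{a2,a1}"] exI[where x=c1]) simp
  qed
next
  case False
  define loc where "loc a \<longleftrightarrow> (\<exists>t<3. a \<in> C t \<and> x t \<in> {c0,c1,c2})" for a
  have nl: "\<forall>t<3. a \<in> C t \<longrightarrow> d a (x t) = 100" if "\<not> loc a" "a \<in> {a0,a1,a2}" for a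
    using that far unfolding loc_def by auto
  have "\<not> (loc a0 \<and> loc a1)" "\<not> (loc a0 \<and> loc a2)" "\<not> (loc a1 \<and> loc a2)"
    using False uniq unfolding loc_def by blast+
  then consider "\<not> loc a0" "\<not> loc a1" | "\<not> loc a1" "\<not> loc a2" | "\<not> loc a0" "\<not> loc a2" by blast
  then show ?thesis
  proof cases
    case 1
    have "blocks lam \<alpha> d C x {a0,a1} c0"
      proof (rule farpair)
      show "\<forall>t<3. a0 \<in> C t \<longrightarrow> d a0 (x t) = 100" using nl 1 by simp
      show "\<forall>t<3. a1 \<in> C t \<longrightarrow> d a1 (x t) = 100" using nl 1 by simp
    qed (use dist z aa ac fin in simp_all)
    moreover have "card {a0,a1} = 2" using dist by simp
    ultimately show ?thesis by (intro exI[where x="{a0,a1}"] exI[where x=c0]) simp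
  next
    case 2
    have "blocks lam \<alpha> d C x {a1,a2} c0"
      proof (rule farpair)
      show "\<forall>t<3. a1 \<in> C t \<longrightarrow> d a1 (x t) = 100" using nl 2 by simp
      show "\<forall>t<3. a2 \<in> C t \<longrightarrow> d a2 (x t) = 100" using nl 2 by simp
    qed (use dist z aa ac fin in simp_all)
    moreover have "card {a1,a2} = 2" using dist by simp
    ultimately show ?thesis by (intro exI[where x="{a1,a2}"] exI[where x=c0]) simp
  next
    case 3
    have "blocks lam \<alpha> d C x {a0,a2} c0"
      proof (rule farpair)
      show "\<forall>t<3. a0 \<in> C t \<longrightarrow> d a0 (x t) = 100" using nl 3 by simp
      show "\<forall>t<3. a2 \<in> C t \<longrightarrow> d a2 (x t) = 100" using nl 3 by simp
    qed (use dist z aa ac fin in simp_all)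
    moreover have "card {a0,a2} = 2" using dist by simp
    ultimately show ?thesis by (intro exI[where x="{a0,a2}"] exI[where x=c0]) simp
  qed
qed
end
definition side :: "nat \<Rightarrow> nat" where "side p = (p mod 6) div 3"
definition dd :: "nat \<Rightarrow> nat \<Rightarrow> real" where
"dd p q = (if p = q then 0 else if side p \<noteq> side q then 100 else if (p < 6) = (q < 6) then 3 else
   (let a = (if p < 6 then p else q) mod 3; c = (if p < 6 then q else p) mod 3 in
    if a = c then 2 else if a = (c+1) mod 3 then 1 else 4))"

lemma dd_pm: "pseudometric_on ({0..5} \<union> {6..11}) dd"
proof -
  have e: "{0..5} \<union> {6..11::nat} = {0,1,2,3,4,5,6,7,8,9,10,11}" by auto
  show ?thesis unfolding e pseudometric_on_def by (simp add: dd_def side_def Let_def)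
qed

lemma pigeon:
  fixes x :: "nat \<Rightarrow> nat"
  assumes "\<forall>t<3. x t \<in> {6..11::nat}"
  shows "(\<forall>t1<3. \<forall>t2<3. x t1 \<in> {6,7,8} \<longrightarrow> x t2 \<in> {6,7,8} \<longrightarrow> t1 = t2) \<or>
         (\<forall>t1<3. \<forall>t2<3. x t1 \<in> {9,10,11} \<longrightarrow> x t2 \<in> {9,10,11} \<longrightarrow> t1 = t2)"
proof (rule ccontr)
  assume "\<not> ?thesis"
  then obtain t1 t2 t3 t4 where h: "t1 < 3" "t2 < 3" "t3 < 3" "t4 < 3" "t1 \<noteq> t2" "t3 \<noteq> t4"
    "x t1 \<in> {6,7,8}" "x t2 \<in> {6,7,8}" "x t3 \<in> {9,10,11}" "x t4 \<in> {9,10,11}" by blast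
  have "t1 \<noteq> t3" "t1 \<noteq> t4" "t2 \<noteq> t3" "t2 \<noteq> t4" using h by auto
  then show False using h(1-6) by arith
qed

lemma dd_side0: "dd 0 0 = 0" "dd 1 1 = 0" "dd 2 2 = 0" "dd 0 1 = 3" "dd 0 2 = 3" "dd 1 0 = 3" "dd 1 2 = 3" "dd 2 0 = 3" "dd 2 1 = 3" "dd 0 6 = 2" "dd 0 7 = 4" "dd 0 8 = 1" "dd 1 6 = 1" "dd 1 7 = 2" "dd 1 8 = 4" "dd 2 6 = 4" "dd 2 7 = 1" "dd 2 8 = 2"
  by (simp_all add: dd_def side_def)

lemma dd_side1: "dd 3 3 = 0" "dd 4 4 = 0" "dd 5 5 = 0" "dd 3 4 = 3" "dd 3 5 = 3" "dd 4 3 = 3" "dd 4 5 = 3" "dd 5 3 = 3" "dd 5 4 = 3" "dd 3 9 = 2" "dd 3 10 = 4" "dd 3 11 = 1" "dd 4 9 = 1" "dd 4 10 = 2" "dd 4 11 = 4" "dd 5 9 = 4" "dd 5 10 = 1" "dd 5 11 = 2"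
  by (simp_all add: dd_def side_def)

theorem mainTheorem10:
  fixes lam \<alpha> :: real
  assumes "0 \<le> lam" and "lam \<le> 1"
    and "1 \<le> \<alpha>" and "\<alpha> < 2 * (1 - lam) / (2 * lam + 1)"
  shows "\<exists>(N :: nat set) (M :: nat set) (k :: nat) (d :: nat \<Rightarrow> nat \<Rightarrow> real).
           finite N \<and> N \<noteq> {} \<and> finite M \<and> M \<noteq> {} \<and> 0 < k \<and>
           pseudometric_on (N \<union> M) d \<and>
           (\<forall>C x. is_clustering N M k C x \<longrightarrow> \<not> in_alpha_core lam d N M k \<alpha> C x)"
proof -
  interpret arsetup lam \<alpha> using assms by unfold_locales
  have main: "\<not> in_alpha_core lam dd {0..5} {6..11} 3 \<alpha> C x"
    if cl: "is_clustering {0..5} {6..11} 3 C x" for C x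
  proof -
    have xm: "\<forall>t<3. x t \<in> {6..11::nat}" using cl unfolding is_clustering_def by blast
    have un: "(\<Union>t<3. C t) = {0..5}" using cl unfolding is_clustering_def by blast
    have fin: "\<forall>t<3. finite (C t)"
    proof (intro allI impI)
      fix t :: nat assume "t < 3"
      then have "C t \<subseteq> {0..5}" using un by blast
      then show "finite (C t)" using finite_subset by blast
    qed
    have cov: "\<forall>i\<in>{0..5}. \<exists>t<3. i \<in> C t" using un by blast
    have "\<exists>S y. S \<subseteq> {0..5} \<and> card S = 2 \<and> y \<in> {6..11} \<and> blocks lam \<alpha> dd C x S y"
      using pigeon[OF xm]
    proof
      assume u: "\<forall>t1<3. \<forall>t2<3. x t1 \<in> {6,7,8} \<longrightarrow> x t2 \<in> {6,7,8} \<longrightarrow> t1 = t2"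
      have far: "\<forall>t<3. x t \<notin> {6,7,8} \<longrightarrow> dd 0 (x t) = 100 \<and> dd 1 (x t) = 100 \<and> dd 2 (x t) = 100"
      proof (intro allI impI)
        fix t :: nat assume "t < 3" "x t \<notin> {6,7,8}"
        moreover have "6 \<le> x t \<and> x t \<le> 11" using xm \<open>t < 3\<close> by auto
        ultimately have "x t = 9 \<or> x t = 10 \<or> x t = 11" by auto
        then show "dd 0 (x t) = 100 \<and> dd 1 (x t) = 100 \<and> dd 2 (x t) = 100"
          by (elim disjE) (simp_all add: dd_def side_def)
      qed
      have "\<exists>S y. S \<subseteq> {0,1,2} \<and> card S = 2 \<and> y \<in> {6,7,8} \<and> blocks lam \<alpha> dd C x S y"
      proof -
        have cov': "\<forall>i\<in>{0,1,2}. \<exists>t<3. i \<in> C t" using cov by simp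
        show ?thesis by (rule sidelem[OF _ _ _ dd_side0(1) dd_side0(2) dd_side0(3) dd_side0(4) dd_side0(6) dd_side0(5) dd_side0(8) dd_side0(7) dd_side0(9) dd_side0(10) dd_side0(11) dd_side0(12) dd_side0(13) dd_side0(14) dd_side0(15) dd_side0(16) dd_side0(17) dd_side0(18) far cov' u fin]) simp_all
      qed
      then obtain S y where "S \<subseteq> {0,1,2}" "card S = 2" "y \<in> {6,7,8}" "blocks lam \<alpha> dd C x S y" by blast
      moreover have "{0,1,2,3,4,5} \<subseteq> {0..5::nat}" "{6,7,8,9,10,11} \<subseteq> {6..11::nat}" by auto
      ultimately show ?thesis by (intro exI[of _ S] exI[of _ y]) blast
    next
      assume u: "\<forall>t1<3. \<forall>t2<3. x t1 \<in> {9,10,11} \<longrightarrow> x t2 \<in> {9,10,11} \<longrightarrow> t1 = t2"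
      have far: "\<forall>t<3. x t \<notin> {9,10,11} \<longrightarrow> dd 3 (x t) = 100 \<and> dd 4 (x t) = 100 \<and> dd 5 (x t) = 100"
      proof (intro allI impI)
        fix t :: nat assume "t < 3" "x t \<notin> {9,10,11}"
        moreover have "6 \<le> x t \<and> x t \<le> 11" using xm \<open>t < 3\<close> by auto
        ultimately have "x t = 6 \<or> x t = 7 \<or> x t = 8" by auto
        then show "dd 3 (x t) = 100 \<and> dd 4 (x t) = 100 \<and> dd 5 (x t) = 100"
          by (elim disjE) (simp_all add: dd_def side_def)
      qed
      have "\<exists>S y. S \<subseteq> {3,4,5} \<and> card S = 2 \<and> y \<in> {9,10,11} \<and> blocks lam \<alpha> dd C x S y"
      proof -
        have cov': "\<forall>i\<in>{3,4,5}. \<exists>t<3. i \<in> C t" using cov by simp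
        show ?thesis by (rule sidelem[OF _ _ _ dd_side1(1) dd_side1(2) dd_side1(3) dd_side1(4) dd_side1(6) dd_side1(5) dd_side1(8) dd_side1(7) dd_side1(9) dd_side1(10) dd_side1(11) dd_side1(12) dd_side1(13) dd_side1(14) dd_side1(15) dd_side1(16) dd_side1(17) dd_side1(18) far cov' u fin]) simp_all
      qed
      then obtain S y where "S \<subseteq> {3,4,5}" "card S = 2" "y \<in> {9,10,11}" "blocks lam \<alpha> dd C x S y" by blast
      moreover have "{0,1,2,3,4,5} \<subseteq> {0..5::nat}" "{6,7,8,9,10,11} \<subseteq> {6..11::nat}" by auto
      ultimately show ?thesis by (intro exI[of _ S] exI[of _ y]) blast
    qed
    then obtain S y where S: "S \<subseteq> {0..5}" "card S = 2" "y \<in> {6..11}" "blocks lam \<alpha> dd C x S y" by blast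
    have "real (card {0..5::nat}) / real (3::nat) \<le> real (card S)" using S(2) by simp
    then show ?thesis unfolding in_alpha_core_def using S unfolding blocks_def by blast
  qed
  show ?thesis
    apply (rule exI[where x="{0..5}"], rule exI[where x="{6..11}"], rule exI[where x=3], rule exI[where x=dd])
    using main dd_pm by simp
qed

end
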